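(* Let $k$ be a field, $R=k[x_1,\ldots,x_n]$, and let $I$ be an almost reverse lexicographic ideal in $R$ whose last generator is $M_\omega=x_1^{\omega_1}\cdots x_\mu^{\omega_\mu}$ with $\omega_\mu>0$. Then the minimal monomial generating set of $I$ is \[\mathcal{G}(I)=\{x_1^{f_1}\}\cup\bigcup_{i=1}^{\mu-1}\{x^\alpha x_{i+1}^{f_{i+1}(\alpha)}:\ \alpha=(\alpha_1,\ldots,\alpha_i)\in\mathcal{I}_i\}.\]
   Context: Monomial order: degree reverse lexicographic: for $M=x^\alpha,N=x^\beta$, $M>N$ iff $\deg M>\deg N$, or degrees are equal and for the largest $s$ with $\alpha_s\neq\beta_s$ one has $\alpha_s<\beta_s$. For $\alpha\in\mathbb{Z}^s_{\ge0}$, $x^\alpha=x_1^{\alpha_1}\cdots x_s^{\alpha_s}$, $|\alpha|=\sum\alpha_j$, and $\alpha\le\beta$ iff $x^\alpha\le x^\beta$. A monomial ideal $I$ is almost reverse lexicographic if for every monomial $M$ and every minimal monomial generator $N$ of $I$ with $\deg M=\deg N$ and $M>N$, one has $M\in I$. $\mathcal{G}(I)$ is the minimal monomial generating set; $\max M$ is the largest $i$ with $x_i\mid M$. The last generator $M_\omega$ is the element of $\mathcal{G}(I)$ of maximal degree that is smallest in the order among elements of $\mathcal{G}(I)$ of that degree; $\mu=\max M_\omega$. $f_1=\min\{t:x_1^t\in I\}$; for $2\le i\le\mu$, $\alpha\in\mathbb{Z}^{i-1}_{\ge0}$, $f_i(\alpha)=\min\{t\ge0:x^\alpha x_i^t\in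 I\}\in\mathbb{Z}_{\ge0}\cup\{\infty\}$. For $1\le i\le\mu-2$, $\mathcal{I}_i=\{(\alpha_1,\ldots,\alpha_i)\in\mathbb{Z}^i_{\ge0}: 0\le\alpha_1<f_1,\ 0\le\alpha_j<f_j(\alpha_1,\ldots,\alpha_{j-1})\ (2\le j\le i)\}$, and $\mathcal{I}_{\mu-1}$ is the set of $(\alpha_1,\ldots,\alpha_{\mu-1})$ satisfying these inequalities for $j\le\mu-1$ together with $(\alpha_1,\ldots,\alpha_{\mu-1})\ge(\omega_1,\ldots,\omega_{\mu-1})$. (If $\mu=1$ the union is empty.) *)

theory Defs
  imports Main "HOL-Library.Extended_Nat"
begin

text \<open>Monomials of k[x_1,...,x_n] are represented by their exponent vectors,
  functions nat => nat supported on {1..n}.  A monomial ideal is determined by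
  the set of monomials it contains, which is upward closed under divisibility.\<close>

definition monoms :: "nat \<Rightarrow> (nat \<Rightarrow> nat) set" where
  "monoms n = {a. \<forall>i. a i \<noteq> 0 \<longrightarrow> 1 \<le> i \<and> i \<le> n}"

definition mdeg :: "nat \<Rightarrow> (nat \<Rightarrow> nat) \<Rightarrow> nat" where
  "mdeg n a = (\<Sum>i=1..n. a i)"

definition mdvd :: "(nat \<Rightarrow> nat) \<Rightarrow> (nat \<Rightarrow> nat) \<Rightarrow> bool" where
  "mdvd a b = (\<forall>i. a i \<le> b i)"

definition drl_gt :: "nat \<Rightarrow> (nat \<Rightarrow> nat) \<Rightarrow> (nat \<Rightarrow> nat) \<Rightarrow> bool" where
  "drl_gt n a b = (mdeg n a > mdeg n b \<or>
     (mdeg n a = mdeg n b \<and> (\<exists>s\<in>{1..n}. a s \<noteq> b s \<and>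
        (\<forall>t\<in>{s<..n}. a t = b t) \<and> a s < b s)))"

definition monomial_ideal :: "nat \<Rightarrow> (nat \<Rightarrow> nat) set \<Rightarrow> bool" where
  "monomial_ideal n I = (I \<subseteq> monoms n \<and>
     (\<forall>a\<in>I. \<forall>b\<in>monoms n. mdvd a b \<longrightarrow> b \<in> I))"

definition mingens :: "(nat \<Rightarrow> nat) set \<Rightarrow> (nat \<Rightarrow> nat) set" where
  "mingens I = {a\<in>I. \<forall>b\<in>I. mdvd b a \<longrightarrow> b = a}"

definition almost_revlex :: "nat \<Rightarrow> (nat \<Rightarrow> nat) set \<Rightarrow> bool" where
  "almost_revlex n I = (\<forall>M\<in>monoms n. \<forall>N\<in>mingens I.
      mdeg n M = mdeg n N \<and> drl_gt n M N \<longrightarrow> M \<in> I)"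

definition last_gen :: "nat \<Rightarrow> (nat \<Rightarrow> nat) set \<Rightarrow> (nat \<Rightarrow> nat) \<Rightarrow> bool" where
  "last_gen n I w = (w \<in> mingens I \<and> (\<forall>N\<in>mingens I. mdeg n N \<le> mdeg n w) \<and>
      (\<forall>N\<in>mingens I. mdeg n N = mdeg n w \<longrightarrow> N = w \<or> drl_gt n N w))"

text \<open>f_i(alpha) = min{t. x^alpha x_i^t \<in> I} (infinity if none), where alpha is
  supported on {1..i-1}; f_1 = fval I 1 (\<lambda>_. 0).\<close>
definition fval :: "(nat \<Rightarrow> nat) set \<Rightarrow> nat \<Rightarrow> (nat \<Rightarrow> nat) \<Rightarrow> enat" where
  "fval I i \<alpha> = (if \<exists>t. \<alpha>(i := t) \<in> I then enat (LEAST t. \<alpha>(i := t) \<in> I) else \<infinity>)"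

definition trunc :: "nat \<Rightarrow> (nat \<Rightarrow> nat) \<Rightarrow> (nat \<Rightarrow> nat)" where
  "trunc j a = (\<lambda>k. if k \<le> j then a k else 0)"

definition Iset :: "nat \<Rightarrow> (nat \<Rightarrow> nat) set \<Rightarrow> (nat \<Rightarrow> nat) \<Rightarrow> nat \<Rightarrow> nat \<Rightarrow> (nat \<Rightarrow> nat) set" where
  "Iset n I w \<mu> i = {\<alpha>\<in>monoms i.
      (\<forall>j\<in>{1..i}. enat (\<alpha> j) < fval I j (trunc (j - 1) \<alpha>)) \<and>
      (i = \<mu> - 1 \<longrightarrow> (\<alpha> = trunc (\<mu> - 1) w \<or> drl_gt n \<alpha> (trunc (\<mu> - 1) w)))}"

end

theory Submission
  imports Defs
begin


lemma monomsD: "a \<in> monoms n \<Longrightarrow> a i \<noteq> 0 \<Longrightarrow> 1 \<le> i \<and> i \<le> n"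
  by (auto simp: monoms_def)

lemma monoms_zero: "a \<in> monoms n \<Longrightarrow> i = 0 \<or> n < i \<Longrightarrow> a i = 0"
  using monomsD by fastforce

lemma mdvd_monoms: "mdvd b a \<Longrightarrow> a \<in> monoms n \<Longrightarrow> b \<in> monoms n"
proof -
  assume h1: "mdvd b a" and h2: "a \<in> monoms n"
  { fix i assume "b i \<noteq> 0"
    then have "a i \<noteq> 0" using h1 unfolding mdvd_def by (metis le_zero_eq)
    then have "1 \<le> i \<and> i \<le> n" using monomsD[OF h2] by blast }
  then show ?thesis unfolding monoms_def by blast
qed

lemma monoms_mono: "m \<le> n \<Longrightarrow> a \<in> monoms m \<Longrightarrow> a \<in> monoms n"
  unfolding monoms_def using le_trans by blast

lemma mdvd_trans: "mdvd a b \<Longrightarrow> mdvd b c \<Longrightarrow> mdvd a c"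
  unfolding mdvd_def using order_trans by blast

lemma mdeg_upd:
  assumes "1 \<le> k" "k \<le> n"
  shows "mdeg n (a(k:=v)) + a k = mdeg n a + v"
proof -
  have k: "k \<in> {1..n}" using assms by auto
  have "mdeg n (a(k:=v)) = (a(k:=v)) k + (\<Sum>i\<in>{1..n}-{k}. (a(k:=v)) i)"
    unfolding mdeg_def by (rule sum.remove) (use k in auto)
  moreover have "(\<Sum>i\<in>{1..n}-{k}. (a(k:=v)) i) = (\<Sum>i\<in>{1..n}-{k}. a i)"
    by (rule sum.cong) auto
  ultimately have 1: "mdeg n (a(k:=v)) = v + (\<Sum>i\<in>{1..n}-{k}. a i)" by (metis fun_upd_same)
  have 2: "mdeg n a = a k + (\<Sum>i\<in>{1..n}-{k}. a i)"
    unfolding mdeg_def by (rule sum.remove) (use k in auto)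
  show ?thesis using 1 2 by simp
qed

lemma mdeg_zero[simp]: "mdeg n (\<lambda>_. 0) = 0"
  by (simp add: mdeg_def)

lemma mdeg_mono: "mdvd b a \<Longrightarrow> mdeg n b \<le> mdeg n a"
  unfolding mdeg_def mdvd_def by (rule sum_mono) auto

lemma mdeg_strict:
  assumes "a \<in> monoms n" "mdvd b a" "b \<noteq> a"
  shows "mdeg n b < mdeg n a"
proof -
  obtain i where i: "b i \<noteq> a i" using assms(3) by blast
  then have lt: "b i < a i" using assms(2) by (simp add: mdvd_def le_neq_implies_less)
  then have "i \<in> {1..n}" using monomsD[OF assms(1), of i] by auto
  then show ?thesis unfolding mdeg_def
    by (intro sum_strict_mono_ex1) (use assms(2) lt in \<open>auto simp: mdvd_def\<close>)
qed

lemma exists_sub: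
  assumes "a \<in> monoms n" "k \<le> mdeg n a"
  shows "\<exists>b. mdvd b a \<and> mdeg n b = k"
  using assms
proof (induction "mdeg n a - k" arbitrary: a)
  case 0
  then show ?case by (intro exI[of _ a]) (auto simp: mdvd_def)
next
  case (Suc d)
  have "mdeg n a \<noteq> 0" using Suc by linarith
  then obtain i where i: "i \<in> {1..n}" "a i \<noteq> 0" unfolding mdeg_def by (meson sum.neutral)
  define a' where "a' = a(i := a i - 1)"
  have e: "mdeg n a' + a i = mdeg n a + (a i - 1)" unfolding a'_def using i mdeg_upd by auto
  have a'M: "a' \<in> monoms n" using Suc.prems(1) i unfolding a'_def monoms_def by auto
  have "d = mdeg n a' - k" "k \<le> mdeg n a'" using Suc e i by auto
  then obtain b where b: "mdvd b a'" "mdeg n b = k" using Suc.hyps a'M by blast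
  have "mdvd a' a" unfolding a'_def mdvd_def by auto
  then show ?case using b mdvd_trans by blast
qed

lemma drl_gtI:
  assumes "mdeg n a = mdeg n b" "s \<in> {1..n}" "a s < b s" "\<forall>t\<in>{s<..n}. a t = b t"
  shows "drl_gt n a b"
  unfolding drl_gt_def using assms by (intro disjI2 conjI bexI[of _ s]) auto

lemma fval_fin: "\<alpha>(i:=t) \<in> I \<Longrightarrow> fval I i \<alpha> \<noteq> \<infinity>"
  by (auto simp: fval_def)

lemma fval_enat:
  assumes "fval I i \<alpha> = enat f"
  shows "\<alpha>(i:=f) \<in> I" "s < f \<Longrightarrow> \<alpha>(i:=s) \<notin> I"
proof -
  have ex: "\<exists>t. \<alpha>(i := t) \<in> I" using assms by (auto simp: fval_def split: if_splits)
  then have f: "f = (LEAST t. \<alpha>(i := t) \<in> I)" using assms by (auto simp: fval_def)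
  show "\<alpha>(i:=f) \<in> I" unfolding f using ex by (rule LeastI_ex)
  show "s < f \<Longrightarrow> \<alpha>(i:=s) \<notin> I" unfolding f using not_less_Least by blast
qed

lemma fval_le: "\<alpha>(i:=t) \<in> I \<Longrightarrow> \<exists>f. fval I i \<alpha> = enat f \<and> f \<le> t"
  by (auto simp: fval_def intro: Least_le)

lemma fval_eq: "\<alpha>(i:=t) \<in> I \<Longrightarrow> (\<forall>s<t. \<alpha>(i:=s) \<notin> I) \<Longrightarrow> fval I i \<alpha> = enat t"
  unfolding fval_def
  by (auto intro!: Least_equality) (meson not_less)

lemma fval_notinf: "fval I i \<alpha> \<noteq> \<infinity> \<Longrightarrow> \<exists>f. fval I i \<alpha> = enat f"
  by (cases "fval I i \<alpha>") auto



locale arl =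
  fixes n \<mu> :: nat and I :: "(nat \<Rightarrow> nat) set" and w :: "nat \<Rightarrow> nat"
  assumes mi: "monomial_ideal n I" and ar: "almost_revlex n I" and lg: "last_gen n I w"
    and mu1: "1 \<le> \<mu>" and mun: "\<mu> \<le> n" and wmu: "w \<mu> > 0" and wgt: "\<forall>i>\<mu>. w i = 0"
begin

lemma I_monoms: "a \<in> I \<Longrightarrow> a \<in> monoms n"
  using mi by (auto simp: monomial_ideal_def)

lemma up: "a \<in> I \<Longrightarrow> mdvd a b \<Longrightarrow> b \<in> monoms n \<Longrightarrow> b \<in> I"
  using mi by (auto simp: monomial_ideal_def)

lemma w_min: "w \<in> mingens I" using lg by (simp add: last_gen_def)
lemma w_I: "w \<in> I" using w_min by (simp add: mingens_def)
lemma w_M: "w \<in> monoms n" using I_monoms w_I .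
lemma w_deg: "N \<in> mingens I \<Longrightarrow> mdeg n N \<le> mdeg n w" using lg by (simp add: last_gen_def)
lemma w_last: "N \<in> mingens I \<Longrightarrow> mdeg n N = mdeg n w \<Longrightarrow> N = w \<or> drl_gt n N w"
  using lg by (simp add: last_gen_def)
lemma mingensD: "u \<in> mingens I \<Longrightarrow> b \<in> I \<Longrightarrow> mdvd b u \<Longrightarrow> b = u"
  by (simp add: mingens_def)
lemma mingens_I: "u \<in> mingens I \<Longrightarrow> u \<in> I"
  by (simp add: mingens_def)
lemma ar_use: "N \<in> mingens I \<Longrightarrow> M \<in> monoms n \<Longrightarrow> mdeg n M = mdeg n N \<Longrightarrow> drl_gt n M N \<Longrightarrow> M \<in> I"
  using ar unfolding almost_revlex_def by blast

lemma zero_notin: "(\<lambda>_. 0) \<notin> I"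
proof
  assume "(\<lambda>_. 0) \<in> I"
  then have "(\<lambda>_. 0) = w" using mingensD[OF w_min] by (auto simp: mdvd_def)
  then show False using wmu by auto
qed

lemma mingen_below: "a \<in> I \<Longrightarrow> \<exists>g\<in>mingens I. mdvd g a"
proof (induction "mdeg n a" arbitrary: a rule: less_induct)
  case (less a)
  show ?case
  proof (cases "a \<in> mingens I")
    case True then show ?thesis by (auto simp: mdvd_def)
  next
    case False
    then obtain b where b: "b \<in> I" "mdvd b a" "b \<noteq> a" using less.prems unfolding mingens_def by blast
    have "mdeg n b < mdeg n a" using mdeg_strict[OF I_monoms[OF less.prems] b(2) b(3)] .
    then obtain g where "g \<in> mingens I" "mdvd g b" using less.hyps b(1) by blast
    then show ?thesis using b(2) mdvd_trans by blast
  qed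
qed

lemma stab:
  assumes a: "a \<in> I" and j: "1 \<le> j" "j < m" and am: "a m > 0" and agt: "\<forall>k>m. a k = 0"
  shows "a(m := a m - 1, j := a j + 1) \<in> I"
proof -
  have aM: "a \<in> monoms n" using I_monoms a .
  have mn: "m \<le> n" "1 \<le> m" using monomsD[OF aM, of m] am by auto
  have a'M: "a(m := a m - 1, j := a j + 1) \<in> monoms n"
    using aM j mn unfolding monoms_def by auto
  obtain g where g: "g \<in> mingens I" "mdvd g a" using mingen_below a by blast
  show ?thesis
  proof (cases "g m < a m")
    case True
    have "mdvd g (a(m := a m - 1, j := a j + 1))"
      unfolding mdvd_def
    proof
      fix i show "g i \<le> (a(m := a m - 1, j := a j + 1)) i"
        using g(2) True j unfolding mdvd_def
        by (cases "i = j"; cases "i = m") (auto simp: le_SucI)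
    qed
    then show ?thesis using up[OF mingens_I[OF g(1)] _ a'M] by blast
  next
    case False
    then have gm: "g m = a m" using g(2) by (auto simp: mdvd_def intro: le_antisym)
    have gI: "g \<in> I" using g(1) by (simp add: mingens_def)
    have gM: "g \<in> monoms n" using I_monoms gI .
    let ?h = "g(m := g m - 1)"
    let ?g' = "?h(j := ?h j + 1)"
    have g'M: "?g' \<in> monoms n" using gM j mn unfolding monoms_def by auto
    have e1: "mdeg n ?h + g m = mdeg n g + (g m - 1)" using mdeg_upd mn by auto
    have e2: "mdeg n ?g' + ?h j = mdeg n ?h + (?h j + 1)"
      using mdeg_upd[of j n ?h] j mn by auto
    have deg: "mdeg n ?g' = mdeg n g" using e1 e2 gm am by auto
    have "drl_gt n ?g' g"
      by (rule drl_gtI[OF deg, of m]) (use mn j gm am in auto)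
    then have g'I: "?g' \<in> I" using ar_use[OF g(1) g'M deg] by blast
    have "mdvd ?g' (a(m := a m - 1, j := a j + 1))"
      unfolding mdvd_def
    proof
      fix i show "?g' i \<le> (a(m := a m - 1, j := a j + 1)) i"
        using g(2) gm j unfolding mdvd_def
        by (cases "i = j"; cases "i = m") auto
    qed
    then show ?thesis using up[OF g'I _ a'M] by blast
  qed
qed

lemma div_contra:
  assumes u: "u \<in> mingens I" and lt: "mdeg n u < mdeg n w" and v: "mdvd v w"
    and dv: "mdeg n v = mdeg n u" and gt: "drl_gt n v u"
  shows False
proof -
  have vM: "v \<in> monoms n" using mdvd_monoms[OF v w_M] .
  have "v \<in> I" using ar_use[OF u vM dv gt] .
  then have "v = w" using mingensD[OF w_min] v by blast
  then show False using lt dv by simp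
qed

lemma mingen_max:
  assumes u: "u \<in> mingens I" and um: "u m > 0" and ugt: "\<forall>k>m. u k = 0" and mmu: "\<mu> < m"
  shows False
proof -
  have uM: "u \<in> monoms n" using I_monoms mingens_I[OF u] .
  have "mdeg n u \<le> mdeg n w" using w_deg[OF u] .
  then consider "mdeg n u = mdeg n w" | "mdeg n u < mdeg n w" by linarith
  then show False
  proof cases
    case 1
    then have "u = w \<or> drl_gt n u w" using w_last[OF u] by blast
    then show False
    proof
      assume "u = w" then show False using um wgt mmu by auto
    next
      assume "drl_gt n u w"
      then obtain s where s: "s \<in> {1..n}" "\<forall>t\<in>{s<..n}. u t = w t" "u s < w s"
        using 1 unfolding drl_gt_def by auto
      show False
      proof (cases "s < m")
        case True
        have "m \<le> n" using monomsD[OF uM, of m] um by auto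
        then have "u m = w m" using s(2) True by auto
        then show False using um wgt mmu by auto
      next
        case False
        then show False using s(3) wgt mmu by auto
      qed
    qed
  next
    case 2
    obtain \<beta> where b: "mdvd \<beta> w" "mdeg n \<beta> = mdeg n u"
      using exists_sub[OF w_M, of "mdeg n u"] 2 by auto
    have mn: "m \<le> n" "1 \<le> m" using monomsD[OF uM, of m] um by auto
    have "drl_gt n \<beta> u"
    proof (rule drl_gtI[OF b(2), of m])
      show "m \<in> {1..n}" using mn by auto
      show "\<beta> m < u m" using b(1) wgt mmu um unfolding mdvd_def by (metis le_zero_eq)
      show "\<forall>t\<in>{m<..n}. \<beta> t = u t" using b(1) wgt mmu ugt unfolding mdvd_def
        by (metis greaterThanAtMost_iff le_zero_eq order.strict_trans)
    qed
    then show False using div_contra[OF u 2 b(1) b(2)] by blast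
  qed
qed

end


context arl begin

lemma lemC:
  assumes u: "u \<in> mingens I" and um: "u \<mu> > 0" and ugt: "\<forall>k>\<mu>. u k = 0"
  shows "u(\<mu> := 0) = w(\<mu> := 0) \<or> drl_gt n (u(\<mu> := 0)) (w(\<mu> := 0))"
proof -
  define \<alpha> where "\<alpha> = u(\<mu> := 0)"
  define \<omega> where "\<omega> = w(\<mu> := 0)"
  have uM: "u \<in> monoms n" using I_monoms mingens_I[OF u] .
  have aM: "\<alpha> \<in> monoms n" using uM mu1 mun unfolding \<alpha>_def monoms_def by auto
  have oM: "\<omega> \<in> monoms n" using w_M mu1 mun unfolding \<omega>_def monoms_def by auto
  have da: "mdeg n \<alpha> + u \<mu> = mdeg n u" unfolding \<alpha>_def using mdeg_upd[of \<mu> n u 0] mu1 mun by auto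
  have dw: "mdeg n \<omega> + w \<mu> = mdeg n w" unfolding \<omega>_def using mdeg_upd[of \<mu> n w 0] mu1 mun by auto
  have "mdeg n u \<le> mdeg n w" using w_deg[OF u] .
  then consider "mdeg n u = mdeg n w" | "mdeg n u < mdeg n w" by linarith
  then have "\<alpha> = \<omega> \<or> drl_gt n \<alpha> \<omega>"
  proof cases
    case 1
    then have "u = w \<or> drl_gt n u w" using w_last[OF u] by blast
    then show ?thesis
    proof
      assume "u = w" then show ?thesis unfolding \<alpha>_def \<omega>_def by simp
    next
      assume "drl_gt n u w"
      then obtain s where s: "s \<in> {1..n}" "\<forall>t\<in>{s<..n}. u t = w t" "u s < w s"
        using 1 unfolding drl_gt_def by auto
      consider "s = \<mu>" | "s < \<mu>" | "s > \<mu>" by linarith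
      then show ?thesis
      proof cases
        case 1
        have "u \<mu> < w \<mu>" using s(3) 1 by simp
        then have "mdeg n \<alpha> > mdeg n \<omega>" using da dw \<open>mdeg n u = mdeg n w\<close> by linarith
        then show ?thesis unfolding drl_gt_def by auto
      next
        case 2
        then have "u \<mu> = w \<mu>" using s(2) mun by auto
        then have deq: "mdeg n \<alpha> = mdeg n \<omega>" using da dw \<open>mdeg n u = mdeg n w\<close> by linarith
        have "drl_gt n \<alpha> \<omega>"
          by (rule drl_gtI[OF deq, of s]) (use s 2 in \<open>auto simp: \<alpha>_def \<omega>_def\<close>)
        then show ?thesis by blast
      next
        case 3
        then show ?thesis using s(3) wgt by auto
      qed
    qed
  next
    case 2
    consider "mdeg n \<alpha> > mdeg n \<omega>" | "mdeg n \<alpha> < mdeg n \<omega>" | "mdeg n \<alpha> = mdeg n \<omega>" by linarith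
    then show ?thesis
    proof cases
      case 1 then show ?thesis unfolding drl_gt_def by auto
    next
      case 3
      show ?thesis
      proof (cases "\<alpha> = \<omega>")
        case True then show ?thesis by blast
      next
        case False
        define D where "D = {k\<in>{1..n}. \<alpha> k \<noteq> \<omega> k}"
        obtain k where k: "\<alpha> k \<noteq> \<omega> k" using False by blast
        have "\<alpha> k \<noteq> 0 \<or> \<omega> k \<noteq> 0" using k by auto
        then have "k \<in> {1..n}" using monomsD[OF aM] monomsD[OF oM] by auto
        then have kD: "k \<in> D" using k unfolding D_def by auto
        have fD: "finite D" unfolding D_def by auto
        define s where "s = Max D"
        have sD: "s \<in> D" unfolding s_def using fD kD Max_in by blast
        have sne: "\<alpha> s \<noteq> \<omega> s" "s \<in> {1..n}" using sD unfolding D_def by auto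
        have sabove: "\<forall>t\<in>{s<..n}. \<alpha> t = \<omega> t"
        proof
          fix t assume t: "t \<in> {s<..n}"
          show "\<alpha> t = \<omega> t"
          proof (rule ccontr)
            assume "\<alpha> t \<noteq> \<omega> t"
            then have "t \<in> D" using t sne(2) unfolding D_def by auto
            then have "t \<le> s" unfolding s_def using fD by auto
            then show False using t by auto
          qed
        qed
        have smu: "s \<noteq> \<mu>" using sne unfolding \<alpha>_def \<omega>_def by auto
        show ?thesis
        proof (cases "\<alpha> s < \<omega> s")
          case True
          have "drl_gt n \<alpha> \<omega>" by (rule drl_gtI[OF 3 sne(2) True sabove])
          then show ?thesis by blast
        next
          case False
          then have os: "\<omega> s < \<alpha> s" using sne by auto
          define v where "v = \<omega>(\<mu> := u \<mu>)"
          have ult: "u \<mu> < w \<mu>" using da dw 2 3 by linarith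
          have vw: "mdvd v w" unfolding mdvd_def v_def \<omega>_def using ult by auto
          have dv: "mdeg n v = mdeg n u" unfolding v_def using mdeg_upd[of \<mu> n \<omega> "u \<mu>"] mu1 mun da 3
            by (simp add: \<omega>_def)
          have "drl_gt n v u"
          proof (rule drl_gtI[OF dv sne(2)])
            show "v s < u s" using os smu unfolding v_def \<alpha>_def by auto
            show "\<forall>t\<in>{s<..n}. v t = u t"
              using sabove unfolding v_def \<alpha>_def by (auto split: if_splits)
          qed
          then show ?thesis using div_contra[OF u 2 vw dv] by blast
        qed
      qed
    next
      case 4: 2
      define s0 where "s0 = min (u \<mu> - 1) (w \<mu> - 1)"
      have s0u: "s0 < u \<mu>" "s0 < w \<mu>" unfolding s0_def using um wmu by auto
      have le: "mdeg n u - s0 \<le> mdeg n \<omega>"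
        unfolding s0_def using da dw 2 4 um wmu by (auto simp: min_def)
      obtain \<beta> where b: "mdvd \<beta> \<omega>" "mdeg n \<beta> = mdeg n u - s0"
        using exists_sub[OF oM le] by blast
      have bo: "\<beta> t \<le> \<omega> t" for t using b(1) unfolding mdvd_def by blast
      have bmu: "\<beta> \<mu> = 0" using bo[of \<mu>] unfolding \<omega>_def by simp
      define v where "v = \<beta>(\<mu> := s0)"
      have vw: "mdvd v w" unfolding mdvd_def
      proof
        fix t show "v t \<le> w t"
          using bo[of t] s0u unfolding v_def \<omega>_def by (cases "t = \<mu>") auto
      qed
      have "s0 \<le> mdeg n u" using s0u da by linarith
      then have dv: "mdeg n v = mdeg n u" unfolding v_def using mdeg_upd[of \<mu> n \<beta> s0] mu1 mun b(2) bmu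
        by auto
      have "drl_gt n v u"
      proof (rule drl_gtI[OF dv, of \<mu>])
        show "\<mu> \<in> {1..n}" using mu1 mun by auto
        show "v \<mu> < u \<mu>" using s0u unfolding v_def by auto
        show "\<forall>t\<in>{\<mu><..n}. v t = u t"
        proof
          fix t assume t: "t \<in> {\<mu><..n}"
          then have "\<beta> t \<le> w t" using bo[of t] unfolding \<omega>_def by auto
          then show "v t = u t" using t wgt ugt unfolding v_def by auto
        qed
      qed
      then show ?thesis using div_contra[OF u 2 vw dv] by blast
    qed
  qed
  then show ?thesis unfolding \<alpha>_def \<omega>_def .
qed

lemma finA:
  assumes "1 \<le> m" "m < \<mu>" "\<alpha> \<in> monoms n"
  shows "fval I m \<alpha> \<noteq> \<infinity>"
proof -
  define d where "d = mdeg n w"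
  define v where "v = (\<lambda>_::nat. 0::nat)(m := d)"
  have vM: "v \<in> monoms n" using assms mun unfolding v_def monoms_def by auto
  have dv: "mdeg n v = mdeg n w" unfolding v_def d_def using mdeg_upd[of m n "\<lambda>_. 0" "mdeg n w"] assms mun
    by auto
  have "drl_gt n v w"
    by (rule drl_gtI[OF dv, of \<mu>]) (use mu1 mun wmu wgt assms in \<open>auto simp: v_def\<close>)
  then have "v \<in> I" using ar_use[OF w_min vM dv] by blast
  moreover have "mdvd v (\<alpha>(m := d))" unfolding v_def mdvd_def by auto
  moreover have "\<alpha>(m := d) \<in> monoms n" using assms mun unfolding monoms_def by auto
  ultimately have "\<alpha>(m := d) \<in> I" using up by blast
  then show ?thesis by (rule fval_fin)
qed

lemma finC:
  assumes aM: "\<alpha> \<in> monoms n" and az: "\<forall>t\<ge>\<mu>. \<alpha> t = 0"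
    and ao: "\<alpha> = w(\<mu>:=0) \<or> drl_gt n \<alpha> (w(\<mu>:=0))"
  shows "fval I \<mu> \<alpha> \<noteq> \<infinity>"
proof -
  define \<omega> where "\<omega> = w(\<mu> := 0)"
  have dw: "mdeg n \<omega> + w \<mu> = mdeg n w" unfolding \<omega>_def using mdeg_upd[of \<mu> n w 0] mu1 mun by auto
  have dA: "mdeg n (\<alpha>(\<mu> := t)) = mdeg n \<alpha> + t" for t
    using mdeg_upd[of \<mu> n \<alpha> t] mu1 mun az by auto
  from ao[folded \<omega>_def] show ?thesis
  proof
    assume "\<alpha> = \<omega>"
    then have "\<alpha>(\<mu> := w \<mu>) = w" unfolding \<omega>_def by simp
    then show ?thesis using w_I fval_fin by metis
  next
    assume "drl_gt n \<alpha> \<omega>"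
    then consider "mdeg n \<alpha> > mdeg n \<omega>"
      | s where "mdeg n \<alpha> = mdeg n \<omega>" "s \<in> {1..n}" "\<forall>t\<in>{s<..n}. \<alpha> t = \<omega> t" "\<alpha> s < \<omega> s"
      unfolding drl_gt_def by auto
    then show ?thesis
    proof cases
      case 1
      obtain \<beta> where b: "mdvd \<beta> \<alpha>" "mdeg n \<beta> = mdeg n \<omega> + 1"
        using exists_sub[OF aM, of "mdeg n \<omega> + 1"] 1 by auto
      have bz: "\<forall>t\<ge>\<mu>. \<beta> t = 0" using b(1) az unfolding mdvd_def by (metis le_zero_eq)
      define v where "v = \<beta>(\<mu> := w \<mu> - 1)"
      have vM: "v \<in> monoms n"
        using mdvd_monoms[OF b(1) aM] mu1 mun unfolding v_def monoms_def by auto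
      have dv: "mdeg n v = mdeg n w" unfolding v_def
        using mdeg_upd[of \<mu> n \<beta> "w \<mu> - 1"] mu1 mun bz b(2) dw wmu by auto
      have "drl_gt n v w"
        by (rule drl_gtI[OF dv, of \<mu>]) (use mu1 mun wmu wgt bz in \<open>auto simp: v_def\<close>)
      then have "v \<in> I" using ar_use[OF w_min vM dv] by blast
      moreover have "mdvd v (\<alpha>(\<mu> := w \<mu> - 1))" using b(1) unfolding v_def mdvd_def by auto
      moreover have "\<alpha>(\<mu> := w \<mu> - 1) \<in> monoms n" using aM mu1 mun unfolding monoms_def by auto
      ultimately have "\<alpha>(\<mu> := w \<mu> - 1) \<in> I" using up by blast
      then show ?thesis by (rule fval_fin)
    next
      case 2
      define v where "v = \<alpha>(\<mu> := w \<mu>)"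
      have vM: "v \<in> monoms n" using aM mu1 mun unfolding v_def monoms_def by auto
      have dv: "mdeg n v = mdeg n w" unfolding v_def using dA 2(1) dw by auto
      have smu: "s < \<mu>"
      proof (rule ccontr)
        assume "\<not> s < \<mu>"
        then show False using 2(4) az wgt unfolding \<omega>_def by (auto split: if_splits)
      qed
      have "drl_gt n v w"
      proof (rule drl_gtI[OF dv 2(2)])
        show "v s < w s" using 2(4) smu unfolding v_def \<omega>_def by auto
        show "\<forall>t\<in>{s<..n}. v t = w t" using 2(3) unfolding v_def \<omega>_def
          by (auto split: if_splits)
      qed
      then have "v \<in> I" using ar_use[OF w_min vM dv] by blast
      then show ?thesis unfolding v_def by (rule fval_fin)
    qed
  qed
qed

end


context arl begin

lemma trunc_w: "trunc (\<mu> - 1) w = w(\<mu> := 0)"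
  using wgt mu1 by (auto simp: trunc_def fun_eq_iff)

lemma notin_I:
  assumes aM: "\<alpha> \<in> monoms i" and i: "1 \<le> i" and lt: "enat (\<alpha> i) < fval I i (trunc (i-1) \<alpha>)"
  shows "\<alpha> \<notin> I"
proof
  assume aI: "\<alpha> \<in> I"
  have eq: "(trunc (i-1) \<alpha>)(i := \<alpha> i) = \<alpha>"
    using monoms_zero[OF aM] i by (auto simp: fun_eq_iff trunc_def)
  obtain f where "fval I i (trunc (i-1) \<alpha>) = enat f" "f \<le> \<alpha> i"
    using fval_le[of "trunc (i-1) \<alpha>" i "\<alpha> i" I] aI eq by auto
  then show False using lt by simp
qed

lemma gen1_in:
  assumes f: "fval I 1 (\<lambda>_. 0) = enat f"
  shows "(\<lambda>_. 0)(1 := f) \<in> mingens I"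
proof -
  have xI: "(\<lambda>_. 0)(1 := f) \<in> I" using fval_enat(1)[OF f] .
  have "b = (\<lambda>_. 0)(1 := f)" if bI: "b \<in> I" and bd: "mdvd b ((\<lambda>_. 0)(1 := f))" for b
  proof -
    have bd': "b k \<le> ((\<lambda>_. 0)(1 := f)) k" for k using bd unfolding mdvd_def by blast
    have bz: "\<forall>k. k \<noteq> 1 \<longrightarrow> b k = 0" using bd' by (metis fun_upd_other le_zero_eq)
    have bf: "b 1 \<le> f" using bd'[of 1] by simp
    have beq: "b = (\<lambda>_. 0)(1 := b 1)" using bz by (auto simp: fun_eq_iff)
    have "\<not> b 1 < f" using fval_enat(2)[OF f, of "b 1"] bI beq by auto
    then have "b 1 = f" using bf by auto
    then show ?thesis using beq by simp
  qed
  then show ?thesis using xI unfolding mingens_def by blast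
qed

lemma gen_in:
  assumes i: "i \<in> {1..\<mu>-1}" and a: "\<alpha> \<in> Iset n I w \<mu> i" and f: "fval I (i+1) \<alpha> = enat f"
  shows "\<alpha>(i+1 := f) \<in> mingens I"
proof -
  have aM: "\<alpha> \<in> monoms i" and conds: "\<forall>j\<in>{1..i}. enat (\<alpha> j) < fval I j (trunc (j-1) \<alpha>)"
    using a unfolding Iset_def by auto
  have in_n: "i + 1 \<le> n" "1 \<le> i" using i mun by auto
  have aMn: "\<alpha> \<in> monoms n" using monoms_mono[OF _ aM] in_n by auto
  have anot: "\<alpha> \<notin> I" using notin_I[OF aM] conds in_n by auto
  have uI: "\<alpha>(i+1 := f) \<in> I" using fval_enat(1)[OF f] .
  have ai1: "\<alpha> (i+1) = 0" using monoms_zero[OF aM] by auto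
  have fpos: "f > 0"
  proof (rule ccontr)
    assume "\<not> f > 0"
    then have "\<alpha>(i+1 := f) = \<alpha>" using ai1 by (auto simp: fun_eq_iff)
    then show False using uI anot by simp
  qed
  have updM: "\<alpha>(i+1 := t) \<in> monoms n" for t using aMn in_n unfolding monoms_def by auto
  have "b = \<alpha>(i+1 := f)" if bI: "b \<in> I" and bd: "mdvd b (\<alpha>(i+1 := f))" for b
  proof -
    have bd': "b t \<le> (\<alpha>(i+1 := f)) t" for t using bd unfolding mdvd_def by blast
    have bi: "b (i+1) = f"
    proof (rule ccontr)
      assume "b (i+1) \<noteq> f"
      moreover have "b (i+1) \<le> f" using bd'[of "i+1"] by simp
      ultimately have lt: "b (i+1) < f" by auto
      have "mdvd b (\<alpha>(i+1 := b (i+1)))" unfolding mdvd_def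
      proof
        fix t show "b t \<le> (\<alpha>(i+1 := b (i+1))) t" using bd'[of t] by (cases "t = i+1") auto
      qed
      then have "\<alpha>(i+1 := b (i+1)) \<in> I" using up[OF bI _ updM] by blast
      then show False using fval_enat(2)[OF f lt] by blast
    qed
    show ?thesis
    proof (rule ccontr)
      assume "b \<noteq> \<alpha>(i+1 := f)"
      then obtain k where k: "b k \<noteq> (\<alpha>(i+1 := f)) k" by blast
      then have kne: "k \<noteq> i+1" using bi by auto
      have bk: "b k < \<alpha> k" using k kne bd'[of k] by simp
      then have k1: "1 \<le> k" "k \<le> i" using monomsD[OF aM, of k] by auto
      have bgt: "\<forall>k'>i+1. b k' = 0"
      proof (intro allI impI)
        fix k' assume "k' > i+1"
        then show "b k' = 0" using bd'[of k'] monoms_zero[OF aM, of k'] by simp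
      qed
      have "b(i+1 := b (i+1) - 1, k := b k + 1) \<in> I"
        by (rule stab[OF bI]) (use k1 bi fpos bgt in auto)
      moreover have "mdvd (b(i+1 := b (i+1) - 1, k := b k + 1)) (\<alpha>(i+1 := f - 1))"
        unfolding mdvd_def
      proof
        fix t show "(b(i+1 := b (i+1) - 1, k := b k + 1)) t \<le> (\<alpha>(i+1 := f - 1)) t"
          using bd'[of t] bi bk kne
          by (cases "t = k"; cases "t = i+1") auto
      qed
      ultimately have "\<alpha>(i+1 := f - 1) \<in> I" using up updM by blast
      then show False using fval_enat(2)[OF f, of "f-1"] fpos by auto
    qed
  qed
  then show ?thesis using uI unfolding mingens_def by blast
qed

lemma mingen_form:
  assumes u: "u \<in> mingens I"
  shows "u = (\<lambda>_. 0)(1 := the_enat (fval I 1 (\<lambda>_. 0))) \<or>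
    (\<exists>i\<in>{1..\<mu>-1}. \<exists>\<alpha>. \<alpha> \<in> Iset n I w \<mu> i \<and> u = \<alpha>(i+1 := the_enat (fval I (i+1) \<alpha>)))"
proof -
  have uI: "u \<in> I" using mingens_I[OF u] .
  have uM: "u \<in> monoms n" using I_monoms uI .
  have "u \<noteq> (\<lambda>_. 0)" using zero_notin uI by auto
  then obtain k0 where k0: "u k0 \<noteq> 0" by auto
  define S where "S = {k. u k \<noteq> 0}"
  have "S \<subseteq> {1..n}" using monomsD[OF uM] unfolding S_def by auto
  then have fS: "finite S" using finite_subset by blast
  have k0S: "k0 \<in> S" using k0 S_def by auto
  define m where "m = Max S"
  have mS: "m \<in> S" unfolding m_def using fS k0S Max_in by blast
  have um: "u m > 0" using mS S_def by auto
  have ugt: "\<forall>k>m. u k = 0"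
  proof (intro allI impI)
    fix k assume "m < k"
    then have "k \<notin> S" unfolding m_def using fS Max_ge not_le by blast
    then show "u k = 0" unfolding S_def by auto
  qed
  have m1: "1 \<le> m" "m \<le> n" using monomsD[OF uM, of m] um by auto
  have mmu: "m \<le> \<mu>"
  proof (rule ccontr)
    assume "\<not> m \<le> \<mu>"
    then show False using mingen_max[OF u um ugt] by simp
  qed
  define \<alpha> where "\<alpha> = u(m := 0)"
  have aM: "\<alpha> \<in> monoms (m-1)"
    unfolding monoms_def \<alpha>_def
  proof (intro CollectI allI impI)
    fix k assume "(u(m := 0)) k \<noteq> 0"
    then have "u k \<noteq> 0 \<and> k \<noteq> m" by (cases "k = m") auto
    then have uk: "u k \<noteq> 0" and km: "k \<noteq> m" by auto
    have k1: "1 \<le> k" using monomsD[OF uM uk] by simp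
    have k2: "k \<le> m"
    proof (rule ccontr)
      assume "\<not> k \<le> m"
      then have "u k = 0" using ugt by simp
      then show False using uk by simp
    qed
    show "1 \<le> k \<and> k \<le> m - 1" using k1 k2 km by auto
  qed
  have ueq0: "\<alpha>(m := u m) = u" unfolding \<alpha>_def by simp
  have fv: "fval I m \<alpha> = enat (u m)"
  proof (rule fval_eq)
    show "\<alpha>(m := u m) \<in> I" using ueq0 uI by simp
    show "\<forall>s<u m. \<alpha>(m := s) \<notin> I"
    proof (intro allI impI notI)
      fix s assume s: "s < u m" and sI: "\<alpha>(m := s) \<in> I"
      have "mdvd (\<alpha>(m := s)) u" using s unfolding mdvd_def \<alpha>_def by auto
      then have "\<alpha>(m := s) = u" using mingensD[OF u sI] by blast
      then show False using s by (metis fun_upd_same less_irrefl_nat)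
    qed
  qed
  have ueq: "u = \<alpha>(m := the_enat (fval I m \<alpha>))" using fv ueq0 by simp
  show ?thesis
  proof (cases "m = 1")
    case True
    have "\<alpha> = (\<lambda>_. 0)" using aM True unfolding monoms_def by auto
    then show ?thesis using ueq True by simp
  next
    case False
    define i where "i = m - 1"
    have i: "i \<in> {1..\<mu>-1}" "m = i + 1" using False m1 mmu unfolding i_def by auto
    have "\<alpha> \<in> Iset n I w \<mu> i"
      unfolding Iset_def
    proof (intro CollectI conjI ballI impI)
      show "\<alpha> \<in> monoms i" using aM i_def by simp
    next
      fix j assume j: "j \<in> {1..i}"
      show "enat (\<alpha> j) < fval I j (trunc (j - 1) \<alpha>)"
      proof (rule ccontr)
        assume "\<not> enat (\<alpha> j) < fval I j (trunc (j - 1) \<alpha>)"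
        then have "fval I j (trunc (j - 1) \<alpha>) \<le> enat (\<alpha> j)" by auto
        then obtain f where f: "fval I j (trunc (j - 1) \<alpha>) = enat f" "f \<le> \<alpha> j"
          by (cases "fval I j (trunc (j - 1) \<alpha>)") auto
        have vI: "(trunc (j - 1) \<alpha>)(j := f) \<in> I" using fval_enat(1)[OF f(1)] .
        have jm: "j < m" using j i by auto
        have "mdvd ((trunc (j - 1) \<alpha>)(j := f)) u"
          unfolding mdvd_def
        proof
          fix t show "((trunc (j - 1) \<alpha>)(j := f)) t \<le> u t"
            using f(2) jm unfolding trunc_def \<alpha>_def by auto
        qed
        then have "(trunc (j - 1) \<alpha>)(j := f) = u" using mingensD[OF u vI] by blast
        then have "((trunc (j - 1) \<alpha>)(j := f)) m = u m" by simp
        moreover have "\<not> m \<le> j - 1" "m \<noteq> j" using jm by arith+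
        then have "((trunc (j - 1) \<alpha>)(j := f)) m = 0" by (simp add: trunc_def)
        ultimately show False using um by simp
      qed
    next
      assume "i = \<mu> - 1"
      then have "m = \<mu>" using i mu1 by auto
      then have "\<alpha> = w(\<mu> := 0) \<or> drl_gt n \<alpha> (w(\<mu> := 0))"
        using lemC[OF u] um ugt unfolding \<alpha>_def by simp
      then show "\<alpha> = trunc (\<mu> - 1) w \<or> drl_gt n \<alpha> (trunc (\<mu> - 1) w)" using trunc_w by simp
    qed
    then show ?thesis using ueq i by blast
  qed
qed

lemma P1: "fval I 1 (\<lambda>_. 0) \<noteq> \<infinity>"
proof (cases "\<mu> = 1")
  case True
  have "(\<lambda>_. 0) = w(\<mu> := 0)"
    using True wgt monoms_zero[OF w_M, of 0] apply (auto simp: fun_eq_iff)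
    subgoal for x by (cases x) auto
    done
  moreover have "(\<lambda>_. 0::nat) \<in> monoms n" by (simp add: monoms_def)
  moreover have "\<forall>t\<ge>\<mu>. (\<lambda>_. 0::nat) t = 0" by simp
  ultimately have "fval I \<mu> (\<lambda>_. 0) \<noteq> \<infinity>" using finC[of "\<lambda>_. 0"] by blast
  then show ?thesis using True by simp
next
  case False
  then show ?thesis using finA[of 1 "\<lambda>_. 0"] mu1 by (auto simp: monoms_def)
qed

lemma P2: "\<forall>i\<in>{1..\<mu>-1}. \<forall>\<alpha>\<in>Iset n I w \<mu> i. fval I (i+1) \<alpha> \<noteq> \<infinity>"
proof (intro ballI)
  fix i \<alpha> assume i: "i \<in> {1..\<mu>-1}" and a: "\<alpha> \<in> Iset n I w \<mu> i"
  have aM: "\<alpha> \<in> monoms i" using a unfolding Iset_def by auto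
  have aMn: "\<alpha> \<in> monoms n" using monoms_mono[OF _ aM] i mun by auto
  show "fval I (i+1) \<alpha> \<noteq> \<infinity>"
  proof (cases "i + 1 < \<mu>")
    case True
    then show ?thesis using finA[OF _ True aMn] by auto
  next
    case False
    then have im: "i = \<mu> - 1" "i + 1 = \<mu>" using i by auto
    then have "\<alpha> = w(\<mu> := 0) \<or> drl_gt n \<alpha> (w(\<mu> := 0))"
      using a trunc_w unfolding Iset_def by auto
    moreover have "\<forall>t\<ge>\<mu>. \<alpha> t = 0" using monoms_zero[OF aM] im by auto
    ultimately show ?thesis using finC[OF aMn] im by auto
  qed
qed

lemma main:
  "fval I 1 (\<lambda>_. 0) \<noteq> \<infinity>
    \<and> (\<forall>i\<in>{1..\<mu>-1}. \<forall>\<alpha>\<in>Iset n I w \<mu> i. fval I (i+1) \<alpha> \<noteq> \<infinity>)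
    \<and> mingens I =
       {(\<lambda>_. 0)(1 := the_enat (fval I 1 (\<lambda>_. 0)))}
       \<union> (\<Union>i\<in>{1..\<mu>-1}. {\<alpha>(i+1 := the_enat (fval I (i+1) \<alpha>)) | \<alpha>. \<alpha> \<in> Iset n I w \<mu> i})"
  (is "_ \<and> _ \<and> _ = ?A \<union> ?B")
proof (intro conjI P1 P2 equalityI subsetI)
  fix u assume um: "u \<in> mingens I"
  show "u \<in> ?A \<union> ?B"
    using mingen_form[OF um]
  proof (elim disjE bexE exE conjE)
    assume "u = (\<lambda>_. 0)(1 := the_enat (fval I 1 (\<lambda>_. 0)))"
    then show ?thesis by (intro UnI1) simp
  next
    fix i \<alpha> assume i: "i \<in> {1..\<mu>-1}" and a: "\<alpha> \<in> Iset n I w \<mu> i"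
      and ua: "u = \<alpha>(i+1 := the_enat (fval I (i+1) \<alpha>))"
    have "u \<in> {\<alpha>(i+1 := the_enat (fval I (i+1) \<alpha>)) | \<alpha>. \<alpha> \<in> Iset n I w \<mu> i}"
      using a ua by blast
    then show ?thesis by (intro UnI2 UN_I[OF i])
  qed
next
  fix u assume u: "u \<in> ?A \<union> ?B"
  then consider "u \<in> ?A" | "u \<in> ?B" by (rule UnE)
  then show "u \<in> mingens I"
  proof cases
    case 1
    then have u1: "u = (\<lambda>_. 0)(1 := the_enat (fval I 1 (\<lambda>_. 0)))" by (rule singletonD)
    obtain f where f: "fval I 1 (\<lambda>_. 0) = enat f" using fval_notinf[OF P1] by blast
    then show ?thesis using gen1_in[OF f] u1 by simp
  next
    case 2
    then obtain i where i: "i \<in> {1..\<mu>-1}"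
      and ui: "u \<in> {\<alpha>(i+1 := the_enat (fval I (i+1) \<alpha>)) | \<alpha>. \<alpha> \<in> Iset n I w \<mu> i}"
      by (rule UN_E)
    then obtain \<alpha> where a: "\<alpha> \<in> Iset n I w \<mu> i" and ua: "u = \<alpha>(i+1 := the_enat (fval I (i+1) \<alpha>))"
      by blast
    have "fval I (i+1) \<alpha> \<noteq> \<infinity>" using P2 i a by blast
    then obtain f where f: "fval I (i+1) \<alpha> = enat f" using fval_notinf by blast
    have "\<alpha>(i+1 := f) \<in> mingens I" using gen_in[OF i a f] .
    moreover have "u = \<alpha>(i+1 := f)" using ua f by simp
    ultimately show ?thesis by simp
  qed
qed

end

theorem proposition2p10:
  fixes n \<mu> :: nat and I :: "(nat \<Rightarrow> nat) set" and w :: "nat \<Rightarrow> nat"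
  assumes "monomial_ideal n I"
    and "almost_revlex n I"
    and "last_gen n I w"
    and "1 \<le> \<mu>" and "\<mu> \<le> n" and "w \<mu> > 0" and "\<forall>i>\<mu>. w i = 0"
  shows "fval I 1 (\<lambda>_. 0) \<noteq> \<infinity>
    \<and> (\<forall>i\<in>{1..\<mu>-1}. \<forall>\<alpha>\<in>Iset n I w \<mu> i. fval I (i+1) \<alpha> \<noteq> \<infinity>)
    \<and> mingens I =
       {(\<lambda>_. 0)(1 := the_enat (fval I 1 (\<lambda>_. 0)))}
       \<union> (\<Union>i\<in>{1..\<mu>-1}. {\<alpha>(i+1 := the_enat (fval I (i+1) \<alpha>)) | \<alpha>. \<alpha> \<in> Iset n I w \<mu> i})"
proof -
  interpret arl n \<mu> I w using assms by (simp add: arl_def)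
  show ?thesis by (rule main)
qed

end
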